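(* Let $\tau\in F_2$ and let $a=(0,0)$, $b\in\{0,\tfrac12\}^2$. Then $$|\theta_{a,b}(0,\tau)|\ge 2-\Big(1+\Big(2+\frac{\sqrt2}{\sqrt{\operatorname{Im}\tau_1}}\Big)e^{-\pi\operatorname{Im}\tau_1/2}\Big)\Big(1+\Big(2+\frac{\sqrt2}{\sqrt{\operatorname{Im}\tau_2}}\Big)e^{-\pi\operatorname{Im}\tau_2/2}\Big),$$ and this lower bound is positive when $\operatorname{Im}\tau_1\ge 2$.
   Context: $F_2$ is the standard Siegel fundamental domain for $\mathrm{Sp}_4(\mathbb{Z})$ acting on symmetric complex $2\times2$ matrices $\tau=\begin{pmatrix}\tau_1&\tau_{12}\\ \tau_{12}&\tau_2\end{pmatrix}$ with $\operatorname{Im}\tau>0$; every $\tau\in F_2$ satisfies $|\operatorname{Re}\tau_{ij}|\le 1/2$, $\operatorname{Im}\tau_2\ge\operatorname{Im}\tau_1\ge 2\operatorname{Im}\tau_{12}\ge 0$, $\operatorname{Im}\tau_1\ge\sqrt3/2$. $\theta_{a,b}(Z,\tau)=\sum_{n\in\mathbb{Z}^2}\exp\big(2i\pi(\tfrac12{}^t(n+a)\tau(n+a)+{}^t(n+a)(Z+b))\big)$. *)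

theory Defs
  imports "HOL-Analysis.Analysis"
begin

definition cmat :: "int^2^2 \<Rightarrow> complex^2^2" where
  "cmat M = (\<chi> i j. of_int (M $ i $ j))"

definition Im_mat :: "complex^2^2 \<Rightarrow> real^2^2" where
  "Im_mat \<tau> = (\<chi> i j. Im (\<tau> $ i $ j))"

definition Re_mat :: "complex^2^2 \<Rightarrow> real^2^2" where
  "Re_mat \<tau> = (\<chi> i j. Re (\<tau> $ i $ j))"

definition sym_mat :: "'a^2^2 \<Rightarrow> bool" where
  "sym_mat M \<longleftrightarrow> transpose M = M"

definition pos_def2 :: "real^2^2 \<Rightarrow> bool" where
  "pos_def2 Y \<longleftrightarrow> (\<forall>x::real^2. x \<noteq> 0 \<longrightarrow> x \<bullet> (Y *v x) > 0)"

definition siegel_H2 :: "(complex^2^2) set" where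
  "siegel_H2 = {\<tau>. sym_mat \<tau> \<and> pos_def2 (Im_mat \<tau>)}"

text \<open>Sp_4(Z), written in 2x2 blocks (A B; C D): the block conditions of
  M^T J M = J with J = (0 I; -I 0).\<close>
definition Sp4Z :: "int^2^2 \<Rightarrow> int^2^2 \<Rightarrow> int^2^2 \<Rightarrow> int^2^2 \<Rightarrow> bool" where
  "Sp4Z A B C D \<longleftrightarrow> (sym_mat (transpose A ** C) \<and> sym_mat (transpose B ** D)
                    \<and> transpose A ** D - transpose C ** B = mat 1)"

text \<open>Minkowski reduction for a 2x2 positive definite matrix
  (with the sign normalisation Y_12 >= 0).\<close>
definition minkowski_reduced2 :: "real^2^2 \<Rightarrow> bool" where
  "minkowski_reduced2 Y \<longleftrightarrow> 0 \<le> 2 * Y $ 1 $ 2 \<and> 2 * Y $ 1 $ 2 \<le> Y $ 1 $ 1 \<and> Y $ 1 $ 1 \<le> Y $ 2 $ 2"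

definition siegel_F2 :: "(complex^2^2) set" where
  "siegel_F2 = {\<tau> \<in> siegel_H2.
      (\<forall>i j. \<bar>Re (\<tau> $ i $ j)\<bar> \<le> 1/2)
    \<and> minkowski_reduced2 (Im_mat \<tau>)
    \<and> (\<forall>A B C D. Sp4Z A B C D \<longrightarrow> cmod (det (cmat C ** \<tau> + cmat D)) \<ge> 1)}"

definition theta_char :: "real^2 \<Rightarrow> real^2 \<Rightarrow> complex^2 \<Rightarrow> complex^2^2 \<Rightarrow> complex" where
  "theta_char a b Z \<tau> = (\<Sum>\<^sub>\<infinity>n\<in>(UNIV :: (int^2) set).
     (let v = (\<chi> i. complex_of_real (of_int (n $ i) + a $ i)) in
      exp (2 * pi * \<i> * ((1/2) * (\<Sum>i\<in>UNIV. \<Sum>j\<in>UNIV. v $ i * \<tau> $ i $ j * v $ j)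
                       + (\<Sum>i\<in>UNIV. v $ i * (Z $ i + complex_of_real (b $ i)))))))"

end

theory Submission
  imports Defs
begin


definition summ :: "real^2 \<Rightarrow> real^2 \<Rightarrow> complex^2 \<Rightarrow> complex^2^2 \<Rightarrow> int^2 \<Rightarrow> complex" where
  "summ a b Z \<tau> n = (let v = (\<chi> i. complex_of_real (of_int (n $ i) + a $ i)) in
      exp (2 * pi * \<i> * ((1/2) * (\<Sum>i\<in>UNIV. \<Sum>j\<in>UNIV. v $ i * \<tau> $ i $ j * v $ j)
                       + (\<Sum>i\<in>UNIV. v $ i * (Z $ i + complex_of_real (b $ i))))))"

lemma theta_summ: "theta_char a b Z \<tau> = infsum (summ a b Z \<tau>) UNIV"
  unfolding theta_char_def summ_def by simp

lemma norm_summand: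
  fixes \<tau> :: "complex^2^2" and b :: "real^2" and n :: "int^2"
  assumes "\<tau>$2$1 = \<tau>$1$2"
  shows "norm (summ 0 b 0 \<tau> n)
   = exp (-pi * (Im(\<tau>$1$1) * (of_int (n$1))^2 + 2*Im(\<tau>$1$2)* of_int (n$1)* of_int (n$2) + Im(\<tau>$2$2)*(of_int (n$2))^2))"
  using assms
  by (simp add: summ_def Let_def sum_2 norm_exp_eq_Re power2_eq_square)

lemma summ0: "summ 0 b 0 \<tau> 0 = 1"
  by (simp add: summ_def)


lemma F2_facts:
  assumes "\<tau> \<in> siegel_F2"
  shows "\<tau>$2$1 = \<tau>$1$2" "1/2 \<le> Im(\<tau>$1$1)" "Im(\<tau>$1$1) \<le> Im(\<tau>$2$2)"
        "0 \<le> Im(\<tau>$1$2)" "2*Im(\<tau>$1$2) \<le> Im(\<tau>$1$1)"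
proof -
  have H: "\<tau> \<in> siegel_H2" and R: "\<forall>i j. \<bar>Re (\<tau> $ i $ j)\<bar> \<le> 1/2"
    and M: "minkowski_reduced2 (Im_mat \<tau>)"
    and S: "\<forall>A B C D. Sp4Z A B C D \<longrightarrow> cmod (det (cmat C ** \<tau> + cmat D)) \<ge> 1"
    using assms by (auto simp: siegel_F2_def)
  from H have "transpose \<tau> = \<tau>" by (simp add: siegel_H2_def sym_mat_def)
  then have "(transpose \<tau>)$1$2 = \<tau>$1$2" by simp
  then show s: "\<tau>$2$1 = \<tau>$1$2" by (simp add: transpose_def)
  from M show m: "Im(\<tau>$1$1) \<le> Im(\<tau>$2$2)" "0 \<le> Im(\<tau>$1$2)" "2*Im(\<tau>$1$2) \<le> Im(\<tau>$1$1)"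
    by (auto simp: minkowski_reduced2_def Im_mat_def)
  define C :: "int^2^2" where "C = (\<chi> i j. if i = 1 \<and> j = 1 then 1 else 0)"
  define D :: "int^2^2" where "D = (\<chi> i j. if i = 2 \<and> j = 2 then 1 else 0)"
  have Ce: "C$1$1 = 1" "C$1$2 = 0" "C$2$1 = 0" "C$2$2 = 0" by (simp_all add: C_def)
  have De: "D$1$1 = 0" "D$1$2 = 0" "D$2$1 = 0" "D$2$2 = 1" by (simp_all add: D_def)
  have "Sp4Z D (-C) C D"
    unfolding Sp4Z_def sym_mat_def
    by (simp add: matrix_matrix_mult_def transpose_def mat_def vec_eq_iff forall_2 sum_2 Ce De)
  with S have "cmod (det (cmat C ** \<tau> + cmat D)) \<ge> 1" by blast
  moreover have "det (cmat C ** \<tau> + cmat D) = \<tau>$1$1"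
    by (simp add: det_2 cmat_def Ce De matrix_matrix_mult_def sum_2)
  ultimately have "cmod (\<tau>$1$1) \<ge> 1" by simp
  then have "1 \<le> (Re (\<tau>$1$1))^2 + (Im (\<tau>$1$1))^2"
    by (simp add: cmod_def)
  moreover have "\<bar>Re (\<tau>$1$1)\<bar> \<le> 1/2" using R by blast
  then have "\<bar>Re (\<tau>$1$1)\<bar>^2 \<le> (1/2)^2" by (rule power_mono) simp
  ultimately have "(Im (\<tau>$1$1))^2 \<ge> 3/4" by (simp add: power2_abs power2_eq_square)
  moreover have "Im (\<tau>$1$1) \<ge> 0" using m by linarith
  ultimately show "1/2 \<le> Im(\<tau>$1$1)"
  proof (rule_tac ccontr)
    assume a: "(Im (\<tau>$1$1))^2 \<ge> 3/4" "Im (\<tau>$1$1) \<ge> 0" "\<not> 1/2 \<le> Im(\<tau>$1$1)"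
    then have "(Im (\<tau>$1$1))^2 \<le> (1/2)^2" by (intro power_mono) auto
    then have "(Im (\<tau>$1$1))^2 \<le> 1/4" by (simp add: power2_eq_square)
    with a(1) show False by linarith
  qed
qed



lemma sum_gauss_step:
  fixes c :: real
  assumes c: "c > 0"
  defines "r \<equiv> exp (-4*c)"
  shows "N \<ge> 1 \<Longrightarrow> (\<Sum>m\<in>{-int N..int N}. exp (-c * (of_int m)^2)) + 2*r^N/(1-r)
           \<le> 1 + 2*exp(-c) + 2*r/(1-r)"
proof (induction N rule: nat_induct_at_least)
  case base
  have "{-int 1..int 1} = {-1,0,1::int}" by auto
  then show ?case by simp
next
  case (Suc N)
  have r0: "0 < r" "r < 1" using c by (auto simp: r_def)
  have split: "{-int (Suc N)..int (Suc N)} = insert (-int (Suc N)) (insert (int (Suc N)) {-int N..int N})"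
    by auto
  have g: "exp (-c * (of_int (int (Suc N)))^2) \<le> r^N"
  proof -
    have "r^N = exp (real N * (-4*c))" unfolding r_def by (rule exp_of_nat_mult[symmetric])
    moreover have "-c * (of_int (int (Suc N)))^2 \<le> real N * (-4*c)"
    proof -
      have e: "(real N + 1)^2 - 4 * real N = (real N - 1)^2" by (simp add: power2_eq_square algebra_simps)
      have "4 * real N \<le> (real N + 1)^2" using e zero_le_power2[of "real N - 1"] by linarith
      then show ?thesis using c by (simp add: mult_left_mono algebra_simps)
    qed
    ultimately show ?thesis by simp
  qed
  have "(\<Sum>m\<in>{-int (Suc N)..int (Suc N)}. exp (-c * (of_int m)^2))
      = (\<Sum>m\<in>{-int N..int N}. exp (-c * (of_int m)^2)) + 2 * exp (-c * (of_int (int (Suc N)))^2)"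
    unfolding split by (simp add: power2_eq_square algebra_simps)
  also have "\<dots> \<le> (\<Sum>m\<in>{-int N..int N}. exp (-c * (of_int m)^2)) + 2 * r^N" using g by simp
  finally have A: "(\<Sum>m\<in>{-int (Suc N)..int (Suc N)}. exp (-c * (of_int m)^2))
     \<le> (\<Sum>m\<in>{-int N..int N}. exp (-c * (of_int m)^2)) + 2 * r^N" .
  have B: "2 * r^N + 2*r^(Suc N)/(1-r) = 2*r^N/(1-r)"
    using r0 by (simp add: field_simps)
  show ?case using A B Suc.IH by linarith
qed

lemma sum_gauss_le:
  fixes c :: real
  assumes c: "c > 0"
  shows "(\<Sum>m\<in>{-int N..int N}. exp (-c * (of_int m)^2)) \<le> 1 + 2*exp(-c) + 2*exp(-4*c)/(1-exp(-4*c))"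
proof (cases "N = 0")
  case True
  have "0 \<le> 2*exp(-4*c)/(1-exp(-4*c))" using c by (simp add: divide_nonneg_pos)
  then show ?thesis using True by simp
next
  case False
  have r0: "0 < exp(-4*c)" "exp(-4*c) < 1" using c by auto
  have "0 \<le> 2*exp(-4*c)^N/(1-exp(-4*c))" using r0 by (simp add: divide_nonneg_pos)
  with sum_gauss_step[OF c, of N] False show ?thesis by simp
qed

lemma numeric_bound:
  fixes y :: real
  assumes y: "y \<ge> 1/2"
  shows "1 + 2*exp(-(pi*y/2)) + 2*exp(-4*(pi*y/2))/(1-exp(-4*(pi*y/2)))
         \<le> 1 + (2 + sqrt 2 / sqrt y) * exp (- pi * y / 2)"
proof -
  define e where "e = exp (- pi * y / 2)"
  have e0: "e > 0" by (simp add: e_def)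
  have e4: "exp(-4*(pi*y/2)) = e^4" unfolding e_def
    by (subst exp_of_nat_mult[symmetric]) simp
  have e3: "e^3 * exp (3*pi*y/2) = 1" unfolding e_def
    by (subst exp_of_nat_mult[symmetric]) (simp add: exp_add[symmetric])
  have "exp (2*pi*y) \<ge> 1 + 2*pi*y" by (rule exp_ge_add_one_self)
  moreover have "2*pi*y \<ge> 1"
  proof -
    have "3*y \<le> pi*y" using pi_gt3 y by (intro mult_right_mono) auto
    then show ?thesis using y by linarith
  qed
  ultimately have "exp (2*pi*y) \<ge> 2" by linarith
  moreover have "e^4 * exp (2*pi*y) = 1" unfolding e_def
    by (subst exp_of_nat_mult[symmetric]) (simp add: exp_add[symmetric])
  moreover have "e^4 * 2 \<le> e^4 * exp (2*pi*y)" if "exp (2*pi*y) \<ge> 2"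
    using e0 that by (intro mult_left_mono) auto
  ultimately have e4h: "e^4 \<le> 1/2" by linarith
  define s where "s = sqrt y"
  have s0: "s > 0" using y by (simp add: s_def)
  have ys: "y = s^2" using y by (simp add: s_def)
  have E: "exp (3*pi*y/2) \<ge> 1 + 9/2 * y"
  proof -
    have "exp (3*pi*y/2) \<ge> 1 + 3*pi*y/2" by (rule exp_ge_add_one_self)
    moreover have "3*pi*y/2 \<ge> 9/2*y"
    proof -
      have "3*y \<le> pi*y" using pi_gt3 y by (intro mult_right_mono) auto
      then show ?thesis by linarith
    qed
    ultimately show ?thesis by linarith
  qed
  have q: "4 * s \<le> 1 + 9/2 * s^2"
  proof -
    have "1 + 9/2 * s^2 - 4 * s = 9/2 * (s - 4/9)^2 + 1/9" by (simp add: power2_eq_square algebra_simps)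
    moreover have "0 \<le> (s-4/9)^2" by simp
    ultimately show ?thesis by linarith
  qed
  have sq2: "sqrt 2 \<ge> 1" by simp
  have key: "4 * s * e^3 \<le> sqrt 2"
  proof -
    have "4 * s \<le> exp (3*pi*y/2)" using q E ys by simp
    then have "4 * s * e^3 \<le> exp (3*pi*y/2) * e^3" using e0 by (simp add: mult_right_mono)
    moreover have "exp (3*pi*y/2) * e^3 = 1" using e3 by (simp add: mult.commute)
    ultimately show ?thesis using sq2 by linarith
  qed
  have "2*e^4/(1-e^4) \<le> 4 * e^4"
  proof -
    have p: "0 \<le> e^4 * (1 - 2*e^4)" using e4h e0 by (intro mult_nonneg_nonneg) auto
    have "2*e^4 \<le> 4 * e^4 * (1-e^4)" using p by (simp add: algebra_simps)
    moreover have "1 - e^4 > 0" using e4h by linarith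
    ultimately show ?thesis by (simp add: divide_le_eq)
  qed
  also have "4 * e^4 = (4 * s * e^3) * e / s" using s0 by (simp add: field_simps power_eq_if)
  also have "\<dots> \<le> sqrt 2 * e / s" using key e0 s0
    by (intro divide_right_mono mult_right_mono) auto
  finally have "2*e^4/(1-e^4) \<le> sqrt 2 / sqrt y * e" by (simp add: s_def)
  then show ?thesis unfolding e4 by (simp add: e_def algebra_simps)
qed


lemma quad_bound:
  fixes y1 y2 y12 a b :: real
  assumes "0 \<le> y12" "2*y12 \<le> y1" "y1 \<le> y2"
  shows "y1 * a^2 / 2 + y2 * b^2 / 2 \<le> y1 * a^2 + 2*y12 * a * b + y2 * b^2"
proof -
  have y1: "0 \<le> y1" using assms by linarith
  have "\<bar>2*y12 * a * b\<bar> = (2*y12) * \<bar>a * b\<bar>" using assms by (simp add: abs_mult)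
  also have "\<dots> \<le> y1 * \<bar>a * b\<bar>" using assms by (intro mult_right_mono) auto
  finally have h1: "\<bar>2*y12 * a * b\<bar> \<le> y1 * \<bar>a * b\<bar>" .
  have "2 * \<bar>a * b\<bar> \<le> a^2 + b^2"
  proof -
    have "0 \<le> (\<bar>a\<bar> - \<bar>b\<bar>)^2" by simp
    then show ?thesis by (simp add: power2_eq_square algebra_simps abs_mult)
  qed
  then have h2: "y1 * (2 * \<bar>a * b\<bar>) \<le> y1 * (a^2 + b^2)" using y1 by (intro mult_left_mono)
  have h3: "y1 * b^2 \<le> y2 * b^2" using assms by (intro mult_right_mono) auto
  have "- \<bar>2*y12 * a * b\<bar> \<le> 2*y12 * a * b" by linarith
  with h1 h2 h3 show ?thesis by (simp add: algebra_simps)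
qed

definition gk :: "real \<Rightarrow> int \<Rightarrow> real" where
  "gk y m = exp (-(pi*y/2) * (of_int m)^2)"

definition Pk :: "real \<Rightarrow> real" where
  "Pk y = 1 + (2 + sqrt 2 / sqrt y) * exp (- pi * y / 2)"

lemma gk_sum_le:
  assumes "y \<ge> 1/2"
  shows "(\<Sum>m\<in>{-int N..int N}. gk y m) \<le> Pk y"
proof -
  have c: "pi*y/2 > 0" using assms by simp
  show ?thesis
    using sum_gauss_le[OF c, of N] numeric_bound[OF assms] unfolding gk_def Pk_def by linarith
qed

lemma gk_pos: "0 < gk y m" by (simp add: gk_def)

definition mkv :: "int \<Rightarrow> int \<Rightarrow> int^2" where
  "mkv a b = (\<chi> i. if i = 1 then a else b)"

lemma mkv_nth[simp]: "mkv a b $ 1 = a" "mkv a b $ 2 = b"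
  by (simp_all add: mkv_def)

lemma mkv_eta: "mkv (n$1) (n$2) = n"
  by (simp add: vec_eq_iff forall_2)

lemma box_sum:
  fixes h1 h2 :: "int \<Rightarrow> real"
  shows "(\<Sum>n\<in>(\<lambda>(a,b). mkv a b) ` (I \<times> J). h1 (n$1) * h2 (n$2)) = (\<Sum>a\<in>I. h1 a) * (\<Sum>b\<in>J. h2 b)"
proof -
  have inj: "inj_on (\<lambda>(a,b). mkv a b) (I \<times> J)"
    by (auto simp: inj_on_def) (metis mkv_nth)+
  have "(\<Sum>n\<in>(\<lambda>(a,b). mkv a b) ` (I \<times> J). h1 (n$1) * h2 (n$2))
        = (\<Sum>(a,b)\<in>I \<times> J. h1 a * h2 b)"
    by (subst sum.reindex[OF inj]) (simp add: case_prod_beta split_def)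
  also have "\<dots> = (\<Sum>a\<in>I. \<Sum>b\<in>J. h1 a * h2 b)"
    by (simp add: sum.cartesian_product)
  also have "\<dots> = (\<Sum>a\<in>I. h1 a) * (\<Sum>b\<in>J. h2 b)"
    by (simp add: sum_product)
  finally show ?thesis .
qed

lemma finite_sum_bound:
  fixes \<tau> :: "complex^2^2" and b :: "real^2"
  assumes "\<tau> \<in> siegel_F2" and F: "finite F"
  shows "(\<Sum>n\<in>F. norm (summ 0 b 0 \<tau> n)) \<le> Pk (Im (\<tau>$1$1)) * Pk (Im (\<tau>$2$2))"
proof -
  note fa = F2_facts[OF assms(1)]
  define y1 where "y1 = Im (\<tau>$1$1)"
  define y2 where "y2 = Im (\<tau>$2$2)"
  have y1: "y1 \<ge> 1/2" and y2: "y2 \<ge> 1/2" using fa by (auto simp: y1_def y2_def)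
  define G where "G n = gk y1 (n$1) * gk y2 (n$2)" for n :: "int^2"
  have nb: "norm (summ 0 b 0 \<tau> n) \<le> G n" for n
  proof -
    have q: "y1 * (of_int (n$1))^2 / 2 + y2 * (of_int (n$2))^2 / 2 \<le>
        y1 * (of_int (n$1))^2 + 2*Im(\<tau>$1$2) * of_int (n$1) * of_int (n$2) + y2 * (of_int (n$2))^2"
      using fa unfolding y1_def y2_def by (intro quad_bound) auto
    have "G n = exp (-pi * (y1 * (of_int (n$1))^2 / 2 + y2 * (of_int (n$2))^2 / 2))"
      by (simp add: G_def gk_def exp_add[symmetric] algebra_simps)
    moreover have "norm (summ 0 b 0 \<tau> n) = exp (-pi *
        (y1 * (of_int (n$1))^2 + 2*Im(\<tau>$1$2) * of_int (n$1) * of_int (n$2) + y2 * (of_int (n$2))^2))"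
      using norm_summand[OF fa(1)] unfolding y1_def y2_def by simp
    moreover have "-pi * (y1 * (of_int (n$1))^2 + 2*Im(\<tau>$1$2) * of_int (n$1) * of_int (n$2) + y2 * (of_int (n$2))^2)
        \<le> -pi * (y1 * (of_int (n$1))^2 / 2 + y2 * (of_int (n$2))^2 / 2)"
      using q by (intro mult_left_mono_neg) auto
    ultimately show ?thesis by simp
  qed
  define N where "N = nat (\<Sum>n\<in>F. \<bar>n$1\<bar> + \<bar>n$2\<bar>)"
  define I where "I = {-int N..int N}"
  define B where "B = (\<lambda>(a,b). mkv a b) ` (I \<times> I)"
  have FB: "F \<subseteq> B"
  proof
    fix n assume n: "n \<in> F"
    have "\<bar>n$1\<bar> + \<bar>n$2\<bar> \<le> (\<Sum>n\<in>F. \<bar>n$1\<bar> + \<bar>n$2\<bar>)"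
      using n F by (intro member_le_sum) auto
    then have "\<bar>n$1\<bar> \<le> int N" "\<bar>n$2\<bar> \<le> int N" unfolding N_def by auto
    then have "(n$1, n$2) \<in> I \<times> I" unfolding I_def by auto
    then have "mkv (n$1) (n$2) \<in> B" unfolding B_def by force
    then show "n \<in> B" by (simp add: mkv_eta)
  qed
  have finB: "finite B" unfolding B_def I_def by simp
  have "(\<Sum>n\<in>F. norm (summ 0 b 0 \<tau> n)) \<le> (\<Sum>n\<in>F. G n)" by (intro sum_mono nb)
  also have "\<dots> \<le> (\<Sum>n\<in>B. G n)"
    using FB finB by (intro sum_mono2) (auto simp: G_def gk_pos less_imp_le)
  also have "\<dots> = (\<Sum>a\<in>I. gk y1 a) * (\<Sum>a\<in>I. gk y2 a)"
    unfolding B_def G_def by (rule box_sum)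
  also have "\<dots> \<le> Pk y1 * Pk y2"
  proof (rule mult_mono)
    show "(\<Sum>a\<in>I. gk y1 a) \<le> Pk y1" unfolding I_def by (rule gk_sum_le[OF y1])
    show "(\<Sum>a\<in>I. gk y2 a) \<le> Pk y2" unfolding I_def by (rule gk_sum_le[OF y2])
    show "0 \<le> Pk y1" using order_trans[OF _ gk_sum_le[OF y1, of 0]] by (simp add: gk_def)
    show "0 \<le> (\<Sum>a\<in>I. gk y2 a)" by (intro sum_nonneg) (simp add: gk_pos less_imp_le)
  qed
  finally show ?thesis by (simp add: y1_def y2_def)
qed

lemma Pk_small:
  assumes "y \<ge> 2"
  shows "0 \<le> Pk y" "Pk y \<le> 11/8"
proof -
  have "sqrt 2 \<le> sqrt y" using assms by simp
  then have s: "sqrt 2 / sqrt y \<le> 1" using assms by (simp add: divide_le_eq)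
  have "exp (1::real) \<ge> 2" using exp_ge_add_one_self[of "1::real"] by simp
  then have "exp (1::real) ^ 3 \<ge> (2::real)^3" by (intro power_mono) auto
  then have "exp (3::real) \<ge> 8" by (simp add: exp_of_nat_mult[symmetric])
  moreover have "exp (pi * y / 2) \<ge> exp (3::real)"
  proof -
    have "3 * 2 \<le> pi * y" using pi_gt3 assms by (intro mult_mono) auto
    then show ?thesis by simp
  qed
  ultimately have "exp (pi*y/2) \<ge> 8" by linarith
  then have e: "exp (- pi * y / 2) \<le> 1/8"
    by (simp add: exp_minus field_simps)
  have e0: "0 < exp (- pi * y / 2)" by simp
  have s0: "0 \<le> sqrt 2 / sqrt y" using assms by (simp add: divide_nonneg_nonneg)
  have "(2 + sqrt 2 / sqrt y) * exp (- pi * y / 2) \<le> 3 * (1/8)"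
    using s e e0 s0 by (intro mult_mono) auto
  then show "Pk y \<le> 11/8" unfolding Pk_def by simp
  show "0 \<le> Pk y" unfolding Pk_def using s0 e0 by simp
qed

theorem mainTheorem13:
  fixes \<tau> :: "complex^2^2" and b :: "real^2"
  assumes "\<tau> \<in> siegel_F2"
    and "b $ 1 \<in> {0, 1/2}" and "b $ 2 \<in> {0, 1/2}"
  defines "y1 \<equiv> Im (\<tau> $ 1 $ 1)" and "y2 \<equiv> Im (\<tau> $ 2 $ 2)"
  defines "L \<equiv> 2 - (1 + (2 + sqrt 2 / sqrt y1) * exp (- pi * y1 / 2))
                  * (1 + (2 + sqrt 2 / sqrt y2) * exp (- pi * y2 / 2))"
  shows "cmod (theta_char 0 b 0 \<tau>) \<ge> L \<and> (y1 \<ge> 2 \<longrightarrow> L > 0)"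
proof
  have LP: "L = 2 - Pk y1 * Pk y2" unfolding L_def Pk_def ..
  define f where "f = summ 0 b 0 \<tau>"
  define P where "P = Pk y1 * Pk y2"
  have fin: "(\<Sum>n\<in>F. norm (f n)) \<le> P" if "finite F" for F
    using finite_sum_bound[OF assms(1) that] unfolding f_def P_def y1_def y2_def .
  have abs: "(\<lambda>x. norm (f x)) summable_on A" for A
    unfolding abs_summable_iff_bdd_above
    by (rule bdd_aboveI2[where M = P]) (auto intro: fin)
  have sumf: "f summable_on A" for A by (rule abs_summable_summable[OF abs])
  have U: "UNIV = insert 0 (UNIV - {0::int^2})" by auto
  have th: "theta_char 0 b 0 \<tau> = 1 + infsum f (UNIV - {0})"
    unfolding theta_summ f_def[symmetric]
    by (subst U, subst infsum_insert[OF sumf]) (auto simp: f_def summ0)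
  have "norm (infsum f (UNIV - {0})) \<le> infsum (\<lambda>n. norm (f n)) (UNIV - {0})"
    by (rule norm_infsum_bound[OF abs])
  also have "\<dots> \<le> P - 1"
  proof (rule infsum_le_finite_sums[OF abs])
    fix F :: "(int^2) set" assume F: "finite F" "F \<subseteq> UNIV - {0}"
    then have "0 \<notin> F" by auto
    then have "(\<Sum>n\<in>insert 0 F. norm (f n)) = norm (f 0) + (\<Sum>n\<in>F. norm (f n))"
      using F by simp
    moreover have "norm (f 0) = 1" by (simp add: f_def summ0)
    moreover have "(\<Sum>n\<in>insert 0 F. norm (f n)) \<le> P" using F by (intro fin) auto
    ultimately show "(\<Sum>n\<in>F. norm (f n)) \<le> P - 1" by linarith
  qed
  finally have r: "norm (infsum f (UNIV - {0})) \<le> P - 1" .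
  have "norm (1::complex) - norm (infsum f (UNIV - {0})) \<le> norm (1 + infsum f (UNIV - {0}))"
    by (rule norm_diff_ineq)
  with r show "cmod (theta_char 0 b 0 \<tau>) \<ge> L" unfolding th LP P_def by simp
next
  show "y1 \<ge> 2 \<longrightarrow> L > 0"
  proof
    assume y: "y1 \<ge> 2"
    have "y1 \<le> y2" using F2_facts[OF assms(1)] by (simp add: y1_def y2_def)
    with y have y2: "y2 \<ge> 2" by linarith
    have "Pk y1 * Pk y2 \<le> 11/8 * (11/8)"
      using Pk_small[OF y] Pk_small[OF y2] by (intro mult_mono) auto
    then show "L > 0" unfolding L_def Pk_def[symmetric] by simp
  qed
qed

end
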